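(* There exist $(P_3,l)$-jumbles for infinitely many positive integers $l$.
   Context: All graphs are finite and simple; $P_3$ is the path on $3$ vertices, and a graph is $P_3$-free if it has no induced subgraph isomorphic to $P_3$. For a positive integer $l$, a graph $H$ is a $(P_3,l)$-jumble if (S1) for every $0\le s\le l-1$, $V(H)$ can be partitioned into $s$ stable sets, $l-1-s$ cliques, and a set $Z$ such that $H[Z]$ is isomorphic to $P_3$; and (S2) for every partition $X_1,\dots,X_l$ of $V(H)$ there exists $i$ such that $H[X_i]$ is not $P_3$-free. *)

theory Defs
  imports Main
begin

definition simple_graph :: "'a set \<Rightarrow> ('a \<Rightarrow> 'a \<Rightarrow> bool) \<Rightarrow> bool" where
  "simple_graph V E \<longleftrightarrow> finite V \<and> (\<forall>x\<in>V. \<forall>y\<in>V. E x y \<longleftrightarrow> E y x) \<and> (\<forall>x\<in>V. \<not> E x x)"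

definition stable_set :: "('a \<Rightarrow> 'a \<Rightarrow> bool) \<Rightarrow> 'a set \<Rightarrow> bool" where
  "stable_set E X \<longleftrightarrow> (\<forall>x\<in>X. \<forall>y\<in>X. x \<noteq> y \<longrightarrow> \<not> E x y)"

definition clique :: "('a \<Rightarrow> 'a \<Rightarrow> bool) \<Rightarrow> 'a set \<Rightarrow> bool" where
  "clique E X \<longleftrightarrow> (\<forall>x\<in>X. \<forall>y\<in>X. x \<noteq> y \<longrightarrow> E x y)"

definition induces_P3 :: "('a \<Rightarrow> 'a \<Rightarrow> bool) \<Rightarrow> 'a set \<Rightarrow> bool" where
  "induces_P3 E Z \<longleftrightarrow> (\<exists>a b c. Z = {a, b, c} \<and> a \<noteq> b \<and> b \<noteq> c \<and> a \<noteq> c \<and>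
       E a b \<and> E b c \<and> \<not> E a c)"

definition P3_free :: "('a \<Rightarrow> 'a \<Rightarrow> bool) \<Rightarrow> 'a set \<Rightarrow> bool" where
  "P3_free E X \<longleftrightarrow> \<not> (\<exists>Z\<subseteq>X. induces_P3 E Z)"

(* (P_3,l)-jumble. A partition of V into l (possibly empty) labelled parts
   X_0..X_{l-1} is encoded by a map f : V -> {0..<l}, X_i = {v in V. f v = i}. *)
definition P3_jumble :: "'a set \<Rightarrow> ('a \<Rightarrow> 'a \<Rightarrow> bool) \<Rightarrow> nat \<Rightarrow> bool" where
  "P3_jumble V E l \<longleftrightarrow> simple_graph V E \<and> l > 0 \<and>
     \<comment> \<open>(S1): parts 0..s-1 stable, parts s..l-2 cliques, part l-1 is Z with H[Z] = P3\<close>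
     (\<forall>s. s \<le> l - 1 \<longrightarrow>
        (\<exists>f. (\<forall>v\<in>V. f v < l) \<and>
             (\<forall>i<s. stable_set E {v\<in>V. f v = i}) \<and>
             (\<forall>i. s \<le> i \<and> i < l - 1 \<longrightarrow> clique E {v\<in>V. f v = i}) \<and>
             induces_P3 E {v\<in>V. f v = l - 1})) \<and>
     \<comment> \<open>(S2): every partition into l parts has a part that is not P3-free\<close>
     (\<forall>f. (\<forall>v\<in>V. f v < l) \<longrightarrow> (\<exists>i<l. \<not> P3_free E {v\<in>V. f v = i}))"

end

theory Submission
  imports Defs "HOL-Library.Nat_Bijection"
begin

definition pt :: "nat \<Rightarrow> nat" where "pt x = fst (prod_decode x)"
definition ix :: "nat \<Rightarrow> nat" where "ix x = snd (prod_decode x)"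
definition JV :: "nat \<Rightarrow> nat set" where
  "JV l = prod_encode ` {(p,k). 1 \<le> p \<and> p \<le> l+1 \<and> k < p}"
definition JE :: "nat \<Rightarrow> nat \<Rightarrow> bool" where "JE x y = (pt x \<noteq> pt y)"

lemma pt_enc[simp]: "pt (prod_encode (p,k)) = p" by (simp add: pt_def)
lemma ix_enc[simp]: "ix (prod_encode (p,k)) = k" by (simp add: ix_def)

lemma eq_iff: "x = y \<longleftrightarrow> pt x = pt y \<and> ix x = ix y"
  by (metis pt_def ix_def prod.collapse prod_decode_inverse)

lemma memJV: "x \<in> JV l \<longleftrightarrow> 1 \<le> pt x \<and> pt x \<le> l+1 \<and> ix x < pt x"
proof
  assume "x \<in> JV l" then show "1 \<le> pt x \<and> pt x \<le> l+1 \<and> ix x < pt x"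
    unfolding JV_def by auto
next
  assume a: "1 \<le> pt x \<and> pt x \<le> l+1 \<and> ix x < pt x"
  have "x = prod_encode (pt x, ix x)" by (simp add: pt_def ix_def)
  then show "x \<in> JV l" unfolding JV_def using a by blast
qed

lemma finJV: "finite (JV l)"
proof -
  have "{(p,k). 1 \<le> p \<and> p \<le> l+1 \<and> k < p} \<subseteq> {..l+1} \<times> {..l+1}" by auto
  then have "finite {(p,k). 1 \<le> p \<and> p \<le> l+1 \<and> k < (p::nat)}"
    using finite_subset by blast
  then show ?thesis unfolding JV_def by simp
qed

lemma class_card:
  assumes "1 \<le> p" "p \<le> l+1"
  shows "card {v\<in>JV l. pt v = p} = p"
proof -
  have "{v\<in>JV l. pt v = p} = prod_encode ` ({p} \<times> {..<p})"
  proof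
    show "{v \<in> JV l. pt v = p} \<subseteq> prod_encode ` ({p} \<times> {..<p})"
    proof
      fix v assume v: "v \<in> {v \<in> JV l. pt v = p}"
      have "v = prod_encode (pt v, ix v)" by (simp add: pt_def ix_def)
      then show "v \<in> prod_encode ` ({p} \<times> {..<p})" using v memJV by auto
    qed
    show "prod_encode ` ({p} \<times> {..<p}) \<subseteq> {v \<in> JV l. pt v = p}"
      using assms by (auto simp: memJV)
  qed
  moreover have "card (prod_encode ` ({p} \<times> {..<p})) = p"
    by (simp add: card_image inj_prod_encode card_cartesian_product)
  ultimately show ?thesis by simp
qed

lemma keyA:
  assumes "P3_free JE X" "u \<in> X" "w \<in> X" "u \<noteq> w" "pt u = pt w" "y \<in> X"
  shows "pt y = pt u"
proof (rule ccontr)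
  assume h: "pt y \<noteq> pt u"
  have "induces_P3 JE {u,y,w}" unfolding induces_P3_def JE_def
    using h assms(4,5) by (metis)
  moreover have "{u,y,w} \<subseteq> X" using assms by auto
  ultimately show False using assms(1) unfolding P3_free_def by blast
qed

lemma S2:
  assumes f: "\<forall>v\<in>JV l. f v < l"
  shows "\<exists>i<l. \<not> P3_free JE {v\<in>JV l. f v = i}"
proof (rule ccontr)
  assume "\<not> ?thesis"
  then have free: "\<And>i. i < l \<Longrightarrow> P3_free JE {v\<in>JV l. f v = i}" by blast
  define X where "X i = {v\<in>JV l. f v = i}" for i
  define T where "T = {i. i < l \<and> (\<forall>u\<in>X i. \<forall>w\<in>X i. pt u = pt w \<longrightarrow> u = w)}"
  define c where "c = card T"
  have Tsub: "T \<subseteq> {..<l}" unfolding T_def by auto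
  then have finT: "finite T" using finite_subset by blast
  have cl: "c \<le> l" unfolding c_def using card_mono[OF _ Tsub] by simp
  have ex: "\<exists>v\<in>JV l. pt v = p \<and> f v \<notin> T" if p: "c+1 \<le> p" "p \<le> l+1" for p
  proof (rule ccontr)
    assume "\<not> ?thesis"
    then have allT: "\<forall>v\<in>{v\<in>JV l. pt v = p}. f v \<in> T" by blast
    have "inj_on f {v\<in>JV l. pt v = p}"
    proof (rule inj_onI)
      fix u w assume u: "u \<in> {v\<in>JV l. pt v = p}" and w: "w \<in> {v\<in>JV l. pt v = p}"
        and fe: "f u = f w"
      have "f u \<in> T" using allT u by blast
      moreover have "u \<in> X (f u)" "w \<in> X (f u)" using u w fe unfolding X_def by auto
      ultimately show "u = w" unfolding T_def using u w by auto
    qed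
    then have "card (f ` {v\<in>JV l. pt v = p}) = p"
      using class_card[of p l] p by (simp add: card_image)
    moreover have "f ` {v\<in>JV l. pt v = p} \<subseteq> T" using allT by blast
    ultimately have "p \<le> c" unfolding c_def using card_mono[OF finT] by metis
    then show False using p by simp
  qed
  define g where "g p = f (SOME v. v \<in> JV l \<and> pt v = p \<and> f v \<notin> T)" for p
  have gp: "\<exists>v\<in>JV l. pt v = p \<and> f v \<notin> T \<and> g p = f v" if p: "c+1 \<le> p" "p \<le> l+1" for p
  proof -
    have "\<exists>v. v \<in> JV l \<and> pt v = p \<and> f v \<notin> T" using ex[OF p] by blast
    from someI_ex[OF this] show ?thesis unfolding g_def by blast
  qed
  have gS: "g ` {c+1..l+1} \<subseteq> {..<l} - T"
  proof
    fix i assume "i \<in> g ` {c+1..l+1}"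
    then obtain p where p: "c+1 \<le> p" "p \<le> l+1" "i = g p" by auto
    then obtain v where "v \<in> JV l" "f v \<notin> T" "g p = f v" using gp by blast
    then show "i \<in> {..<l} - T" using f p by auto
  qed
  have ginj: "inj_on g {c+1..l+1}"
  proof (rule inj_onI)
    fix p q assume p: "p \<in> {c+1..l+1}" and q: "q \<in> {c+1..l+1}" and e: "g p = g q"
    obtain vp where vp: "vp \<in> JV l" "pt vp = p" "f vp \<notin> T" "g p = f vp" using gp p by force
    obtain vq where vq: "vq \<in> JV l" "pt vq = q" "g q = f vq" using gp q by force
    define i where "i = f vp"
    have il: "i < l" using vp f i_def by auto
    have "i \<notin> T" using vp i_def by simp
    then obtain u w where uw: "u \<in> X i" "w \<in> X i" "pt u = pt w" "u \<noteq> w"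
      unfolding T_def using il by blast
    have fr: "P3_free JE (X i)" using free[OF il] unfolding X_def by simp
    have "vp \<in> X i" "vq \<in> X i" using vp vq e i_def unfolding X_def by auto
    then have "pt vp = pt u" "pt vq = pt u" using keyA[OF fr uw(1,2,4,3)] by auto
    then show "p = q" using vp vq by simp
  qed
  have "card {c+1..l+1} \<le> card ({..<l} - T)"
    using card_inj_on_le[OF ginj gS] by simp
  moreover have "card ({..<l} - T) = l - c" unfolding c_def
    using card_Diff_subset[OF finT Tsub] by simp
  ultimately show False using cl by simp
qed

lemma S1:
  assumes l: "l > 0" and s: "s \<le> l - 1"
  shows "\<exists>f. (\<forall>v\<in>JV l. f v < l) \<and>
             (\<forall>i<s. stable_set JE {v\<in>JV l. f v = i}) \<and>
             (\<forall>i. s \<le> i \<and> i < l - 1 \<longrightarrow> clique JE {v\<in>JV l. f v = i}) \<and>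
             induces_P3 JE {v\<in>JV l. f v = l - 1}"
proof -
  define c where "c = l - 1 - s"
  have lc: "l = c + s + 1" using l s c_def by simp
  define Zc where "Zc v = ((pt v = c+2 \<and> ix v \<ge> c) \<or> (pt v = c+1 \<and> ix v = c))" for v
  define f where "f v = (if Zc v then l - 1 else if pt v \<ge> c+3 then pt v - (c+3) else s + ix v)" for v
  have cl: "ix v < c" if "v \<in> JV l" "\<not> Zc v" "\<not> pt v \<ge> c+3" for v
    using that unfolding memJV Zc_def by auto
  have A: "\<forall>v\<in>JV l. f v < l"
  proof
    fix v assume v: "v \<in> JV l"
    show "f v < l"
    proof (cases "Zc v")
      case True then show ?thesis using l f_def by simp
    next
      case False
      show ?thesis
      proof (cases "pt v \<ge> c+3")
        case True then show ?thesis using False v lc unfolding f_def memJV by auto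
      next
        case F2: False then show ?thesis using False cl[OF v False F2] lc unfolding f_def by auto
      qed
    qed
  qed
  have B: "\<forall>i<s. stable_set JE {v\<in>JV l. f v = i}"
  proof (intro allI impI)
    fix i assume i: "i < s"
    have "pt v = i + c + 3" if v: "v \<in> JV l" "f v = i" for v
    proof -
      have "\<not> Zc v" using v i lc f_def by auto
      moreover have "pt v \<ge> c+3" using v i calculation f_def by (cases "pt v \<ge> c+3") auto
      ultimately show ?thesis using v f_def by auto
    qed
    then show "stable_set JE {v\<in>JV l. f v = i}" unfolding stable_set_def JE_def by auto
  qed
  have C: "\<forall>i. s \<le> i \<and> i < l - 1 \<longrightarrow> clique JE {v\<in>JV l. f v = i}"
  proof (intro allI impI)
    fix i assume i: "s \<le> i \<and> i < l - 1"
    have "ix v = i - s" if v: "v \<in> JV l" "f v = i" for v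
    proof -
      have "\<not> Zc v" using v i lc f_def by auto
      moreover have "\<not> pt v \<ge> c+3"
      proof
        assume h: "pt v \<ge> c+3"
        have "pt v \<le> l+1" using v(1) unfolding memJV by simp
        then have "f v < s" using h calculation lc unfolding f_def by simp
        then show False using v i by simp
      qed
      ultimately show ?thesis using v f_def by auto
    qed
    then show "clique JE {v\<in>JV l. f v = i}" unfolding clique_def JE_def
      by (metis (mono_tags, lifting) eq_iff mem_Collect_eq)
  qed
  define a where "a = prod_encode (c+2, c)"
  define b where "b = prod_encode (c+1, c)"
  define d where "d = prod_encode (c+2, c+1)"
  have Zset: "{v\<in>JV l. f v = l - 1} = {a, b, d}"
  proof
    show "{v\<in>JV l. f v = l - 1} \<subseteq> {a, b, d}"
    proof
      fix v assume v: "v \<in> {v\<in>JV l. f v = l - 1}"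
      have "Zc v"
      proof (rule ccontr)
        assume nz: "\<not> Zc v"
        show False
        proof (cases "pt v \<ge> c+3")
          case True then show ?thesis using v nz lc unfolding f_def memJV by auto
        next
          case F2: False then show ?thesis using v nz cl[of v] lc unfolding f_def by auto
        qed
      qed
      then have "(pt v = c+2 \<and> (ix v = c \<or> ix v = c+1)) \<or> (pt v = c+1 \<and> ix v = c)"
        using v unfolding Zc_def memJV by auto
      then show "v \<in> {a, b, d}" unfolding a_def b_def d_def using eq_iff[of v] by auto
    qed
    show "{a, b, d} \<subseteq> {v\<in>JV l. f v = l - 1}"
      unfolding a_def b_def d_def using lc by (auto simp: memJV f_def Zc_def)
  qed
  have D: "induces_P3 JE {v\<in>JV l. f v = l - 1}"
    unfolding Zset induces_P3_def JE_def
    apply (rule exI[of _ a], rule exI[of _ b], rule exI[of _ d])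
    unfolding a_def b_def d_def by (auto simp: eq_iff[of "prod_encode _"])
  show ?thesis using A B C D by blast
qed

lemma jumble: "l > 0 \<Longrightarrow> P3_jumble (JV l) JE l"
  unfolding P3_jumble_def simple_graph_def
  using finJV S1 S2 by (auto simp: JE_def)

theorem theorem3p5:
  shows "infinite {l::nat. l > 0 \<and> (\<exists>(V::nat set) E. P3_jumble V E l)}"
proof -
  have "{l::nat. l > 0 \<and> (\<exists>(V::nat set) E. P3_jumble V E l)} = {0<..}"
    using jumble by auto
  moreover have "infinite ({0<..} :: nat set)"
    by (rule infinite_Ioi)
  ultimately show ?thesis by simp
qed

end
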